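(* For every sequent $\Gamma\Rightarrow\Delta$: if $\Gamma\Rightarrow\Delta$ is provable in $\mathsf{Grz}_\infty+\mathsf{cut}$, then $\Gamma\Rightarrow\Delta$ is provable in $\mathsf{Grz}_\infty$.
   Context: Formulas are built from $\bot$ and atomic propositions $p$ using $\to$ and the unary modality $\Box$. A sequent is an expression $\Gamma\Rightarrow\Delta$ where $\Gamma,\Delta$ are finite multisets of formulas; for a multiset $\Pi=A_1,\dots,A_n$, $\Box\Pi$ denotes $\Box A_1,\dots,\Box A_n$. The sequent calculus $\mathsf{Grz}_\infty$ has initial sequents $\Gamma,p\Rightarrow p,\Delta$ ($p$ atomic) and $\Gamma,\bot\Rightarrow\Delta$, and the rules: $(\to_L)$ from $\Gamma,B\Rightarrow\Delta$ and $\Gamma\Rightarrow A,\Delta$ infer $\Gamma,A\to B\Rightarrow\Delta$; $(\to_R)$ from $\Gamma,A\Rightarrow B,\Delta$ infer $\Gamma\Rightarrow A\to B,\Delta$; $(\mathsf{refl})$ from $\Gamma,B,\Box B\Rightarrow\Delta$ infer $\Gamma,\Box B\Rightarrow\Delta$; $(\Box)$ from the left premise $\Gamma,\Box\Pi\Rightarrow A,\Delta$ and the right premise $\Box\Pi\Rightarrow A$ infer $\Gamma,\Box\Pi\Rightarrow\Box A,\Delta$. The system $\mathsf{Grz}_\infty+\mathsf{cut}$ additionally has the rule $(\mathsf{cut})$: from $\Gamma\Rightarrow A,\Delta$ and $\Gamma,A\Rightarrow\Delta$ infer $\Gamma\Rightarrow\Delta$. An $\infty$-proof in one of these systems is a possibly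 infinite tree whose nodes are labelled by sequents, built according to the rules of the system, whose leaves are labelled by initial sequents, and such that every infinite branch passes through a right premise of the rule $(\Box)$ infinitely many times. A sequent is provable in the system if there is an $\infty$-proof with root labelled by it. *)

theory Defs
  imports Main "HOL-Library.Multiset"
begin

datatype fm = Bot | Atom nat | Imp fm fm | Box fm

type_synonym sequent = "fm multiset \<times> fm multiset"

text \<open>One-step rule instances: conclusion, list of premises; each premise carries a flag
  that is True iff it is the right premise of the rule (Box).\<close>
inductive grz_rule :: "bool \<Rightarrow> sequent \<Rightarrow> (sequent \<times> bool) list \<Rightarrow> bool" for withcut :: bool where
  ax:   "grz_rule withcut (add_mset (Atom p) \<Gamma>, add_mset (Atom p) \<Delta>) []"
| bot:  "grz_rule withcut (add_mset Bot \<Gamma>, \<Delta>) []"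
| impL: "grz_rule withcut (add_mset (Imp A B) \<Gamma>, \<Delta>)
           [((add_mset B \<Gamma>, \<Delta>), False), ((\<Gamma>, add_mset A \<Delta>), False)]"
| impR: "grz_rule withcut (\<Gamma>, add_mset (Imp A B) \<Delta>) [((add_mset A \<Gamma>, add_mset B \<Delta>), False)]"
| refl: "grz_rule withcut (add_mset (Box B) \<Gamma>, \<Delta>)
           [((add_mset B (add_mset (Box B) \<Gamma>), \<Delta>), False)]"
| box:  "grz_rule withcut (\<Gamma> + image_mset Box \<Pi>, add_mset (Box A) \<Delta>)
           [((\<Gamma> + image_mset Box \<Pi>, add_mset A \<Delta>), False), ((image_mset Box \<Pi>, {#A#}), True)]"
| cut:  "withcut \<Longrightarrow> grz_rule withcut (\<Gamma>, \<Delta>)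
           [((\<Gamma>, add_mset A \<Delta>), False), ((add_mset A \<Gamma>, \<Delta>), False)]"

text \<open>Possibly infinite trees are represented by positions (lists of child indices):
  lab p is the sequent at node p, nch p its number of children, rb p says whether
  node p is a right premise of (Box).\<close>
definition valid_pos :: "(nat list \<Rightarrow> nat) \<Rightarrow> nat list \<Rightarrow> bool" where
  "valid_pos nch p \<longleftrightarrow> (\<forall>k < length p. p ! k < nch (take k p))"

definition inf_proof :: "bool \<Rightarrow> (nat list \<Rightarrow> sequent) \<Rightarrow> (nat list \<Rightarrow> nat) \<Rightarrow> (nat list \<Rightarrow> bool) \<Rightarrow> bool" where
  "inf_proof withcut lab nch rb \<longleftrightarrow>
     (\<forall>p. valid_pos nch p \<longrightarrow>
        grz_rule withcut (lab p) (map (\<lambda>i. (lab (p @ [i]), rb (p @ [i]))) [0..<nch p])) \<and>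
     (\<forall>b :: nat \<Rightarrow> nat. (\<forall>n. b n < nch (map b [0..<n])) \<longrightarrow>
        infinite {n. rb (map b [0..<Suc n])})"

definition provable :: "bool \<Rightarrow> sequent \<Rightarrow> bool" where
  "provable withcut S \<longleftrightarrow> (\<exists>lab nch rb. inf_proof withcut lab nch rb \<and> lab [] = S)"

abbreviation Grz_inf_provable :: "sequent \<Rightarrow> bool" where
  "Grz_inf_provable S \<equiv> provable False S"

abbreviation Grz_inf_cut_provable :: "sequent \<Rightarrow> bool" where
  "Grz_inf_cut_provable S \<equiv> provable True S"

end

theory Submission
  imports Defs "HOL-Library.Nat_Bijection" "HOL-Library.Infinite_Set"
begin

fun sat :: "nat set \<Rightarrow> (nat \<Rightarrow> nat \<Rightarrow> bool) \<Rightarrow> (nat \<Rightarrow> nat \<Rightarrow> bool) \<Rightarrow> nat \<Rightarrow> fm \<Rightarrow> bool" where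
  "sat W R V w Bot = False"
| "sat W R V w (Atom p) = V w p"
| "sat W R V w (Imp A B) = (sat W R V w A \<longrightarrow> sat W R V w B)"
| "sat W R V w (Box A) = (\<forall>v\<in>W. R w v \<longrightarrow> sat W R V v A)"

definition model :: "nat set \<Rightarrow> (nat \<Rightarrow> nat \<Rightarrow> bool) \<Rightarrow> bool" where
  "model W R \<longleftrightarrow> finite W \<and> (\<forall>w\<in>W. R w w) \<and> (\<forall>u\<in>W. \<forall>v\<in>W. \<forall>x\<in>W. R u v \<longrightarrow> R v x \<longrightarrow> R u x)
     \<and> (\<forall>u\<in>W. \<forall>v\<in>W. R u v \<longrightarrow> R v u \<longrightarrow> u = v)"

definition refutes :: "nat set \<Rightarrow> (nat \<Rightarrow> nat \<Rightarrow> bool) \<Rightarrow> (nat \<Rightarrow> nat \<Rightarrow> bool) \<Rightarrow> nat \<Rightarrow> sequent \<Rightarrow> bool" where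
  "refutes W R V w S \<longleftrightarrow> w \<in> W \<and> (\<forall>F\<in>#fst S. sat W R V w F) \<and> (\<forall>F\<in>#snd S. \<not> sat W R V w F)"

definition valid :: "sequent \<Rightarrow> bool" where
  "valid S \<longleftrightarrow> (\<forall>W R V w. model W R \<longrightarrow> w \<in> W \<longrightarrow> (\<forall>v\<in>W. R w v) \<longrightarrow> \<not> refutes W R V w S)"

lemma rule_sound:
  assumes "grz_rule c S ps" "model W R" "refutes W R V w S"
  shows "\<exists>j<length ps. \<exists>w'\<in>W. R w w' \<and> refutes W R V w' (fst (ps!j)) \<and>
            (if snd (ps!j) then w' \<noteq> w else w' = w)"
  using assms(1)
proof cases
  case (ax p \<Gamma> \<Delta>) then show ?thesis using assms(3) by (auto simp: refutes_def)
next
  case (bot \<Gamma> \<Delta>) then show ?thesis using assms(3) by (auto simp: refutes_def)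
next
  case (impL A B \<Gamma> \<Delta>)
  have w: "w \<in> W" "R w w" using assms(2,3) by (auto simp: refutes_def model_def)
  show ?thesis
  proof (cases "sat W R V w A")
    case True
    then have "refutes W R V w (add_mset B \<Gamma>, \<Delta>)" using assms(3) impL by (auto simp: refutes_def)
    then show ?thesis using impL w by (intro exI[of _ 0]) auto
  next
    case False
    then have "refutes W R V w (\<Gamma>, add_mset A \<Delta>)" using assms(3) impL by (auto simp: refutes_def)
    then show ?thesis using impL w by (intro exI[of _ 1]) auto
  qed
next
  case (impR \<Gamma> A B \<Delta>)
  have w: "w \<in> W" "R w w" using assms(2,3) by (auto simp: refutes_def model_def)
  have "refutes W R V w (add_mset A \<Gamma>, add_mset B \<Delta>)" using assms(3) impR by (auto simp: refutes_def)
  then show ?thesis using impR w by (intro exI[of _ 0]) auto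
next
  case (refl B \<Gamma> \<Delta>)
  have w: "w \<in> W" "R w w" using assms(2,3) by (auto simp: refutes_def model_def)
  have "refutes W R V w (add_mset B (add_mset (Box B) \<Gamma>), \<Delta>)" using assms(3) refl w by (auto simp: refutes_def)
  then show ?thesis using refl w by (intro exI[of _ 0]) auto
next
  case (box \<Gamma> \<Pi> A \<Delta>)
  have w: "w \<in> W" "R w w" using assms(2,3) by (auto simp: refutes_def model_def)
  show ?thesis
  proof (cases "sat W R V w A")
    case False
    then have "refutes W R V w (\<Gamma> + image_mset Box \<Pi>, add_mset A \<Delta>)" using assms(3) box by (auto simp: refutes_def)
    then show ?thesis using box w by (intro exI[of _ 0]) auto
  next
    case True
    have "\<not> sat W R V w (Box A)" using assms(3) box by (simp add: refutes_def)
    then obtain v where v: "v \<in> W" "R w v" "\<not> sat W R V v A" by auto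
    with True have "v \<noteq> w" by auto
    have "\<forall>F\<in>#image_mset Box \<Pi>. sat W R V w F" using assms(3) box by (simp add: refutes_def del: sat.simps)
    then have allB: "\<forall>B\<in>#\<Pi>. \<forall>u\<in>W. R w u \<longrightarrow> sat W R V u B" by simp
    have tr: "\<forall>u\<in>W. R v u \<longrightarrow> R w u" using assms(2) v w(1) unfolding model_def by blast
    have "\<forall>B\<in>#\<Pi>. \<forall>u\<in>W. R v u \<longrightarrow> sat W R V u B" using allB tr by blast
    then have "refutes W R V v (image_mset Box \<Pi>, {#A#})" using v by (auto simp: refutes_def)
    then show ?thesis using box v \<open>v \<noteq> w\<close> by (intro exI[of _ 1]) auto
  qed
next
  case (cut \<Gamma> \<Delta> A)
  have w: "w \<in> W" "R w w" using assms(2,3) by (auto simp: refutes_def model_def)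
  show ?thesis
  proof (cases "sat W R V w A")
    case True
    then have "refutes W R V w (add_mset A \<Gamma>, \<Delta>)" using assms(3) cut by (auto simp: refutes_def)
    then show ?thesis using cut w by (intro exI[of _ 1]) auto
  next
    case False
    then have "refutes W R V w (\<Gamma>, add_mset A \<Delta>)" using assms(3) cut by (auto simp: refutes_def)
    then show ?thesis using cut w by (intro exI[of _ 0]) auto
  qed
qed

definition ht :: "nat set \<Rightarrow> (nat \<Rightarrow> nat \<Rightarrow> bool) \<Rightarrow> nat \<Rightarrow> nat" where
  "ht W R w = card {v\<in>W. R w v}"

lemma ht_mono:
  assumes "model W R" "w \<in> W" "w' \<in> W" "R w w'"
  shows "ht W R w' \<le> ht W R w" "w' \<noteq> w \<Longrightarrow> ht W R w' < ht W R w"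
proof -
  have sub: "{v\<in>W. R w' v} \<subseteq> {v\<in>W. R w v}" using assms unfolding model_def by blast
  have fin: "finite {v\<in>W. R w v}" using assms(1) unfolding model_def by auto
  show "ht W R w' \<le> ht W R w" unfolding ht_def by (rule card_mono[OF fin sub])
  assume "w' \<noteq> w"
  then have "w \<notin> {v\<in>W. R w' v}" using assms unfolding model_def by blast
  moreover have "w \<in> {v\<in>W. R w v}" using assms unfolding model_def by blast
  ultimately have "{v\<in>W. R w' v} \<subset> {v\<in>W. R w v}" using sub by blast
  then show "ht W R w' < ht W R w" unfolding ht_def by (rule psubset_card_mono[OF fin])
qed

lemma no_inf_descent:
  fixes f :: "nat \<Rightarrow> nat"
  assumes dec: "\<And>n. f (Suc n) \<le> f n" and inf: "infinite {n. f (Suc n) < f n}"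
  shows False
proof -
  have mono: "f m \<le> f n" if "n \<le> m" for m n
    using that dec by (metis antimono_iff_le_Suc antimonoD)
  have "\<exists>n. f n + k \<le> f 0" for k
  proof (induction k)
    case 0 show ?case by (rule exI[of _ 0]) simp
  next
    case (Suc k)
    then obtain n where n: "f n + k \<le> f 0" by blast
    have "\<exists>m\<ge>n. m \<in> {n. f (Suc n) < f n}" using inf unfolding infinite_nat_iff_unbounded_le by blast
    then obtain m where m: "m \<ge> n" "f (Suc m) < f m" by blast
    have "f m \<le> f n" using mono[OF m(1)] .
    then have "f (Suc m) + Suc k \<le> f 0" using n m(2) by linarith
    then show ?case by blast
  qed
  then obtain n where "f n + Suc (f 0) \<le> f 0" by blast
  then show False by linarith
qed

definition enc :: "nat \<Rightarrow> nat \<Rightarrow> nat" where "enc i x = Suc (prod_encode (i, x))"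
definition dec :: "nat \<Rightarrow> nat \<times> nat" where "dec u = prod_decode (u - 1)"

lemma dec_enc[simp]: "dec (enc i x) = (i, x)" by (simp add: enc_def dec_def)
lemma enc_nz[simp]: "enc i x \<noteq> 0" by (simp add: enc_def)
lemma enc_inj[simp]: "enc i x = enc j y \<longleftrightarrow> i = j \<and> x = y" by (simp add: enc_def)

definition gW :: "nat \<Rightarrow> (nat \<Rightarrow> nat set) \<Rightarrow> nat set" where
  "gW n Ws = insert 0 (\<Union>i<n. enc i ` Ws i)"
definition gR :: "(nat \<Rightarrow> nat \<Rightarrow> nat \<Rightarrow> bool) \<Rightarrow> nat \<Rightarrow> nat \<Rightarrow> bool" where
  "gR Rs u v \<longleftrightarrow> u = 0 \<or> (v \<noteq> 0 \<and> fst (dec u) = fst (dec v) \<and> Rs (fst (dec u)) (snd (dec u)) (snd (dec v)))"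
definition gV :: "(nat \<Rightarrow> bool) \<Rightarrow> (nat \<Rightarrow> nat \<Rightarrow> nat \<Rightarrow> bool) \<Rightarrow> nat \<Rightarrow> nat \<Rightarrow> bool" where
  "gV P Vs u p = (if u = 0 then P p else Vs (fst (dec u)) (snd (dec u)) p)"

lemma gW_iff: "u \<in> gW n Ws \<longleftrightarrow> u = 0 \<or> (\<exists>i<n. \<exists>x\<in>Ws i. u = enc i x)"
  unfolding gW_def by auto

lemma gR_enc[simp]: "gR Rs (enc i x) (enc j y) \<longleftrightarrow> i = j \<and> Rs i x y"
  unfolding gR_def by auto
lemma gR_0[simp]: "gR Rs 0 v" unfolding gR_def by auto
lemma gR_enc0[simp]: "\<not> gR Rs (enc i x) 0" unfolding gR_def by auto

lemma sat_glue:
  assumes "i < n" "x \<in> Ws i"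
  shows "sat (gW n Ws) (gR Rs) (gV P Vs) (enc i x) F = sat (Ws i) (Rs i) (Vs i) x F"
  using assms(2)
proof (induction F arbitrary: x)
  case (Atom p) then show ?case by (simp add: gV_def)
next
  case (Box A)
  show ?case
  proof
    assume L: "sat (gW n Ws) (gR Rs) (gV P Vs) (enc i x) (Box A)"
    show "sat (Ws i) (Rs i) (Vs i) x (Box A)"
    proof (simp, intro ballI impI)
      fix y assume y: "y \<in> Ws i" "Rs i x y"
      have "enc i y \<in> gW n Ws" using y assms(1) by (auto simp: gW_iff)
      then have "sat (gW n Ws) (gR Rs) (gV P Vs) (enc i y) A" using L y by simp
      then show "sat (Ws i) (Rs i) (Vs i) y A" using Box.IH y(1) by simp
    qed
  next
    assume L: "sat (Ws i) (Rs i) (Vs i) x (Box A)"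
    show "sat (gW n Ws) (gR Rs) (gV P Vs) (enc i x) (Box A)"
    proof (simp, intro ballI impI)
      fix v assume v: "v \<in> gW n Ws" "gR Rs (enc i x) v"
      then obtain j y where jy: "j < n" "y \<in> Ws j" "v = enc j y" by (auto simp: gW_iff)
      then have "j = i" "Rs i x y" using v(2) by auto
      then show "sat (gW n Ws) (gR Rs) (gV P Vs) v A" using Box.IH jy L by simp
    qed
  qed
qed auto

lemma glue_model:
  assumes "\<forall>i<n. model (Ws i) (Rs i)"
  shows "model (gW n Ws) (gR Rs)"
proof -
  have fin: "finite (gW n Ws)" using assms unfolding gW_def model_def by auto
  have rf: "\<forall>w\<in>gW n Ws. gR Rs w w" using assms unfolding model_def by (auto simp: gW_iff)
  have tr: "\<forall>u\<in>gW n Ws. \<forall>v\<in>gW n Ws. \<forall>x\<in>gW n Ws. gR Rs u v \<longrightarrow> gR Rs v x \<longrightarrow> gR Rs u x"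
  proof (intro ballI impI)
    fix u v x assume m: "u \<in> gW n Ws" "v \<in> gW n Ws" "x \<in> gW n Ws" and r: "gR Rs u v" "gR Rs v x"
    show "gR Rs u x"
    proof (cases "u = 0")
      case False
      then obtain i a where a: "i < n" "a \<in> Ws i" "u = enc i a" using m(1) by (auto simp: gW_iff)
      then have "v \<noteq> 0" using r(1) by (auto simp: gR_def)
      then obtain j b where b: "j < n" "b \<in> Ws j" "v = enc j b" using m(2) by (auto simp: gW_iff)
      then have "x \<noteq> 0" using r(2) b(3) by (auto simp: gR_def)
      then obtain k c where c: "k < n" "c \<in> Ws k" "x = enc k c" using m(3) by (auto simp: gW_iff)
      have "i = j" "j = k" "Rs i a b" "Rs j b c" using r a b c by auto
      then have "Rs i a c" using assms a b c unfolding model_def by blast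
      then show ?thesis using a c \<open>i = j\<close> \<open>j = k\<close> by simp
    qed simp
  qed
  have an: "\<forall>u\<in>gW n Ws. \<forall>v\<in>gW n Ws. gR Rs u v \<longrightarrow> gR Rs v u \<longrightarrow> u = v"
  proof (intro ballI impI)
    fix u v assume m: "u \<in> gW n Ws" "v \<in> gW n Ws" and r: "gR Rs u v" "gR Rs v u"
    show "u = v"
    proof (cases "u = 0 \<or> v = 0")
      case True then show ?thesis using r m by (auto simp: gW_iff)
    next
      case False
      then obtain i a j b where ab: "i < n" "a \<in> Ws i" "u = enc i a" "j < n" "b \<in> Ws j" "v = enc j b"
        using m by (auto simp: gW_iff)
      then have "i = j" "Rs i a b" "Rs i b a" using r by auto
      then have "a = b" using assms ab unfolding model_def by blast
      then show ?thesis using ab \<open>i = j\<close> by simp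
    qed
  qed
  show ?thesis unfolding model_def using fin rf tr an by blast
qed


datatype st = St (sG: "fm multiset") (sD: "fm multiset") (sHa: "fm set") (sHs: "fm set") (sF: bool)

fun clos_a :: "fm set \<Rightarrow> fm set \<Rightarrow> fm \<Rightarrow> bool" where
  "clos_a Ha Hs (Imp A B) = (B \<in> Ha \<or> A \<in> Hs)"
| "clos_a Ha Hs _ = False"

fun clos_s :: "fm set \<Rightarrow> fm set \<Rightarrow> fm \<Rightarrow> bool" where
  "clos_s Ha Hs (Imp A B) = (A \<in> Ha \<and> B \<in> Hs)"
| "clos_s Ha Hs (Box A) = (A \<in> Hs)"
| "clos_s Ha Hs _ = False"

lemma clos_a_mono: "clos_a Ha Hs F \<Longrightarrow> Ha \<subseteq> Ha' \<Longrightarrow> Hs \<subseteq> Hs' \<Longrightarrow> clos_a Ha' Hs' F"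
  by (cases F) auto
lemma clos_s_mono: "clos_s Ha Hs F \<Longrightarrow> Ha \<subseteq> Ha' \<Longrightarrow> Hs \<subseteq> Hs' \<Longrightarrow> clos_s Ha' Hs' F"
  by (cases F) auto

definition Inv :: "st \<Rightarrow> bool" where
  "Inv s \<longleftrightarrow> valid (sG s, sD s) \<and> set_mset (sG s) \<subseteq> sHa s \<and> set_mset (sD s) \<subseteq> sHs s
     \<and> (\<forall>F\<in>sHa s. F \<in># sG s \<or> clos_a (sHa s) (sHs s) F)
     \<and> (\<forall>F\<in>sHs s. F \<in># sD s \<or> clos_s (sHa s) (sHs s) F)"

fun unbox :: "fm \<Rightarrow> fm" where "unbox (Box A) = A" | "unbox _ = Bot"
fun is_box :: "fm \<Rightarrow> bool" where "is_box (Box A) = True" | "is_box _ = False"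
definition unbx :: "fm multiset \<Rightarrow> fm multiset" where "unbx G = image_mset unbox (filter_mset is_box G)"

lemma box_unbx: "image_mset Box (unbx G) = filter_mset is_box G"
proof (induction G)
  case (add x G) then show ?case by (cases x) (auto simp: unbx_def)
qed (simp add: unbx_def)

lemma box_unbx_split: "G = filter_mset (\<lambda>x. \<not> is_box x) G + image_mset Box (unbx G)"
  unfolding box_unbx by (metis multiset_partition union_commute)

lemma box_in_unbx: "Box B \<in># G \<Longrightarrow> Box B \<in># image_mset Box (unbx G)"
  unfolding box_unbx by simp

lemma valid_back:
  assumes "valid S" "\<And>W R V w. model W R \<Longrightarrow> refutes W R V w S' \<Longrightarrow> refutes W R V w S"
  shows "valid S'"
  using assms unfolding valid_def by blast

lemma saturated_box:
  assumes inv: "Inv (St G D Ha Hs f)"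
    and nax: "\<not> (Bot \<in># G \<or> (\<exists>p. Atom p \<in># G \<and> Atom p \<in># D))"
    and niG: "\<not> (\<exists>A B. Imp A B \<in># G)" and niD: "\<not> (\<exists>A B. Imp A B \<in># D)"
    and refl: "\<forall>B. Box B \<in># G \<longrightarrow> B \<in> Ha"
  shows "\<exists>A. Box A \<in># D \<and> valid (image_mset Box (unbx G), {#A#})"
proof (rule ccontr)
  assume nex: "\<not> ?thesis"
  have "finite {A. Box A \<in># D}"
    using finite_vimageI[of "set_mset D" Box] by (simp add: vimage_def inj_def)
  then obtain L where L: "set L = {A. Box A \<in># D}" using finite_list by blast
  define P where "P i M \<longleftrightarrow> (case M of (W, R, V, w) \<Rightarrow> model W R \<and> w \<in> W \<and> (\<forall>v\<in>W. R w v)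
       \<and> refutes W R V w (image_mset Box (unbx G), {#L ! i#}))" for i M
  have "\<forall>i<length L. \<exists>M. P i M"
  proof (intro allI impI)
    fix i assume "i < length L"
    then have "Box (L ! i) \<in># D" using L nth_mem by fastforce
    then have "\<not> valid (image_mset Box (unbx G), {#L ! i#})" using nex by blast
    then show "\<exists>M. P i M" unfolding valid_def P_def by auto
  qed
  define M where "M i = (SOME M. P i M)" for i
  have PM: "P i (M i)" if "i < length L" for i
    using \<open>\<forall>i<length L. \<exists>M. P i M\<close> that unfolding M_def by (metis someI_ex)
  define Ws where "Ws i = fst (M i)" for i
  define Rs where "Rs i = fst (snd (M i))" for i
  define Vs where "Vs i = fst (snd (snd (M i)))" for i
  define ws where "ws i = snd (snd (snd (M i)))" for i
  have Mi: "model (Ws i) (Rs i) \<and> ws i \<in> Ws i \<and> (\<forall>v\<in>Ws i. Rs i (ws i) v)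
       \<and> refutes (Ws i) (Rs i) (Vs i) (ws i) (image_mset Box (unbx G), {#L ! i#})" if "i < length L" for i
    using PM[OF that] unfolding P_def Ws_def Rs_def Vs_def ws_def by (auto split: prod.splits)
  define n where "n = length L"
  define W' where "W' = gW n Ws"
  define R' where "R' = gR Rs"
  define V' where "V' = gV (\<lambda>p. Atom p \<in># G) Vs"
  have mod: "model W' R'" unfolding W'_def R'_def n_def using Mi glue_model by blast
  have z: "0 \<in> W'" unfolding W'_def gW_def by simp
  have inv': "set_mset G \<subseteq> Ha" "set_mset D \<subseteq> Hs"
    "\<forall>F\<in>Ha. F \<in># G \<or> clos_a Ha Hs F" "\<forall>F\<in>Hs. F \<in># D \<or> clos_s Ha Hs F" "valid (G, D)"
    using inv unfolding Inv_def by auto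
  have truth: "(F \<in> Ha \<longrightarrow> sat W' R' V' 0 F) \<and> (F \<in> Hs \<longrightarrow> \<not> sat W' R' V' 0 F)" for F
  proof (induction F)
    case Bot then show ?case using inv'(3) nax by force
  next
    case (Atom p)
    have "Atom p \<in> Ha \<Longrightarrow> Atom p \<in># G" using inv'(3) by force
    moreover have "Atom p \<in> Hs \<Longrightarrow> Atom p \<in># D" using inv'(4) by force
    ultimately show ?case using nax by (auto simp: V'_def gV_def)
  next
    case (Imp A B)
    have "Imp A B \<in> Ha \<Longrightarrow> B \<in> Ha \<or> A \<in> Hs" using inv'(3) niG by force
    moreover have "Imp A B \<in> Hs \<Longrightarrow> A \<in> Ha \<and> B \<in> Hs" using inv'(4) niD by force
    ultimately show ?case using Imp.IH by auto
  next
    case (Box B)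
    have a: "sat W' R' V' 0 (Box B)" if h: "Box B \<in> Ha"
    proof -
      have bG: "Box B \<in># G" using inv'(3) h by force
      then have "B \<in> Ha" using refl by blast
      then have s0: "sat W' R' V' 0 B" using Box.IH by blast
      show ?thesis
      proof (simp, intro ballI impI)
        fix v assume v: "v \<in> W'" "R' 0 v"
        show "sat W' R' V' v B"
        proof (cases "v = 0")
          case True then show ?thesis using s0 by simp
        next
          case False
          then obtain i y where iy: "i < n" "y \<in> Ws i" "v = enc i y" using v(1) unfolding W'_def by (auto simp: gW_iff)
          have mi: "model (Ws i) (Rs i)" "ws i \<in> Ws i" "\<forall>v\<in>Ws i. Rs i (ws i) v"
            "refutes (Ws i) (Rs i) (Vs i) (ws i) (image_mset Box (unbx G), {#L ! i#})"
            using Mi iy(1) unfolding n_def by auto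
          have "Box B \<in># image_mset Box (unbx G)" using box_in_unbx[OF bG] .
          then have "B \<in># unbx G" by auto
          moreover have "\<forall>x\<in>#unbx G. sat (Ws i) (Rs i) (Vs i) (ws i) (Box x)" using mi(4) unfolding refutes_def by (simp del: sat.simps)
          ultimately have "sat (Ws i) (Rs i) (Vs i) (ws i) (Box B)" by blast
          then have "sat (Ws i) (Rs i) (Vs i) y B" using mi(3) iy(2) by simp
          then show ?thesis using sat_glue[of i n y Ws Rs "\<lambda>p. Atom p \<in># G" Vs B, OF iy(1,2)] iy(3) unfolding W'_def R'_def V'_def by simp
        qed
      qed
    qed
    have b: "\<not> sat W' R' V' 0 (Box B)" if h: "Box B \<in> Hs"
    proof (cases "Box B \<in># D")
      case True
      then have "B \<in> set L" using L by simp
      then obtain i where i: "i < length L" "L ! i = B" by (meson in_set_conv_nth)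
      have mi: "ws i \<in> Ws i" "refutes (Ws i) (Rs i) (Vs i) (ws i) (image_mset Box (unbx G), {#L ! i#})"
        using Mi i(1) by auto
      then have ns: "\<not> sat (Ws i) (Rs i) (Vs i) (ws i) B" using i(2) unfolding refutes_def by simp
      have "enc i (ws i) \<in> W'" using mi(1) i(1) unfolding W'_def n_def by (auto simp: gW_iff)
      moreover have "\<not> sat W' R' V' (enc i (ws i)) B"
        using sat_glue[of i n "ws i" Ws] ns mi(1) i(1) unfolding W'_def R'_def V'_def n_def by simp
      ultimately show ?thesis unfolding R'_def by auto
    next
      case False
      then have "B \<in> Hs" using inv'(4) h by force
      then have "\<not> sat W' R' V' 0 B" using Box.IH by blast
      then show ?thesis using z unfolding R'_def by auto
    qed
    show ?case using a b by blast
  qed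
  have "refutes W' R' V' 0 (G, D)" unfolding refutes_def using z truth inv'(1,2) by auto
  moreover have "\<forall>v\<in>W'. R' 0 v" unfolding R'_def by simp
  ultimately show False using inv'(5) mod z unfolding valid_def by blast
qed


fun g :: "fm \<Rightarrow> nat" and h :: "fm set \<Rightarrow> fm \<Rightarrow> nat" where
  "g Bot = 0" | "g (Atom p) = 0" | "g (Imp A B) = Suc (h {} A + g B)" | "g (Box A) = Suc (g A)"
| "h Ha Bot = 0" | "h Ha (Atom p) = 0" | "h Ha (Imp A B) = Suc (h Ha B + g A)"
| "h Ha (Box B) = (if B \<in> Ha then 0 else Suc (h Ha B))"

lemma h_anti: "Ha \<subseteq> Ha' \<Longrightarrow> h Ha' F \<le> h Ha F"
  by (induction F) auto

definition mu :: "st \<Rightarrow> nat" where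
  "mu s = sum_mset (image_mset (h (sHa s)) (sG s)) + sum_mset (image_mset g (sD s))"

lemma sum_anti: "Ha \<subseteq> Ha' \<Longrightarrow> sum_mset (image_mset (h Ha') M) \<le> sum_mset (image_mset (h Ha) M)"
  by (rule sum_mset_mono) (rule h_anti)

definition iG :: "fm multiset \<Rightarrow> fm \<times> fm" where "iG G = (SOME q. Imp (fst q) (snd q) \<in># G)"
definition rG :: "fm set \<Rightarrow> fm multiset \<Rightarrow> fm" where "rG Ha G = (SOME B. Box B \<in># G \<and> B \<notin> Ha)"
definition bA :: "fm multiset \<Rightarrow> fm multiset \<Rightarrow> fm" where
  "bA G D = (SOME A. Box A \<in># D \<and> valid (image_mset Box (unbx G), {#A#}))"
definition axs :: "fm multiset \<Rightarrow> fm multiset \<Rightarrow> bool" where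
  "axs G D \<longleftrightarrow> Bot \<in># G \<or> (\<exists>p. Atom p \<in># G \<and> Atom p \<in># D)"

lemma iG: "\<exists>A B. Imp A B \<in># G \<Longrightarrow> Imp (fst (iG G)) (snd (iG G)) \<in># G"
  unfolding iG_def by (rule someI_ex) auto
lemma rG: "\<exists>B. Box B \<in># G \<and> B \<notin> Ha \<Longrightarrow> Box (rG Ha G) \<in># G \<and> rG Ha G \<notin> Ha"
  unfolding rG_def by (rule someI_ex)
lemma bA: "\<exists>A. Box A \<in># D \<and> valid (image_mset Box (unbx G), {#A#}) \<Longrightarrow>
    Box (bA G D) \<in># D \<and> valid (image_mset Box (unbx G), {#bA G D#})"
  unfolding bA_def by (rule someI_ex)

fun kids :: "st \<Rightarrow> st list" where
"kids (St G D Ha Hs f) =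
 (if axs G D then []
  else if (\<exists>A B. Imp A B \<in># G) then
    [St (add_mset (snd (iG G)) (G - {#Imp (fst (iG G)) (snd (iG G))#})) D (insert (snd (iG G)) Ha) Hs False,
     St (G - {#Imp (fst (iG G)) (snd (iG G))#}) (add_mset (fst (iG G)) D) Ha (insert (fst (iG G)) Hs) False]
  else if (\<exists>A B. Imp A B \<in># D) then
    [St (add_mset (fst (iG D)) G) (add_mset (snd (iG D)) (D - {#Imp (fst (iG D)) (snd (iG D))#}))
        (insert (fst (iG D)) Ha) (insert (snd (iG D)) Hs) False]
  else if (\<exists>B. Box B \<in># G \<and> B \<notin> Ha) then
    [St (add_mset (rG Ha G) G) D (insert (rG Ha G) Ha) Hs False]
  else if (\<exists>A. Box A \<in># D \<and> valid (image_mset Box (unbx G), {#A#})) then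
    [St G (add_mset (bA G D) (D - {#Box (bA G D)#})) Ha (insert (bA G D) Hs) False,
     St (image_mset Box (unbx G)) {#bA G D#} (set_mset (image_mset Box (unbx G))) {bA G D} True]
  else [])"

lemma Inv_step:
  assumes "Inv (St G D Ha Hs f)" "valid (G', D')" "Ha \<subseteq> Ha'" "Hs \<subseteq> Hs'"
    "set_mset G' \<subseteq> Ha'" "set_mset D' \<subseteq> Hs'"
    "\<forall>F\<in>Ha'. F \<notin> Ha \<longrightarrow> F \<in># G'" "\<forall>F\<in>Hs'. F \<notin> Hs \<longrightarrow> F \<in># D'"
    "\<forall>F. F \<in># G \<longrightarrow> F \<in># G' \<or> clos_a Ha' Hs' F" "\<forall>F. F \<in># D \<longrightarrow> F \<in># D' \<or> clos_s Ha' Hs' F"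
  shows "Inv (St G' D' Ha' Hs' f')"
  using assms unfolding Inv_def by (auto intro: clos_a_mono clos_s_mono)

abbreviation out :: "st \<Rightarrow> sequent \<times> bool" where "out c \<equiv> ((sG c, sD c), sF c)"

definition good :: "st \<Rightarrow> bool" where
  "good s \<longleftrightarrow> grz_rule False (sG s, sD s) (map out (kids s)) \<and> (\<forall>c\<in>set (kids s). Inv c \<and> (\<not> sF c \<longrightarrow> mu c < mu s))"

lemma good_ax:
  assumes "axs G D" shows "good (St G D Ha Hs f)"
proof -
  have "grz_rule False (G, D) []"
  proof (cases "Bot \<in># G")
    case True
    then show ?thesis using grz_rule.bot[of False "G - {#Bot#}" D] by simp
  next
    case False
    then obtain p where "Atom p \<in># G" "Atom p \<in># D" using assms unfolding axs_def by blast
    then show ?thesis using grz_rule.ax[of False p "G - {#Atom p#}" "D - {#Atom p#}"] by simp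
  qed
  then show ?thesis using assms unfolding good_def by simp
qed

lemma good_impL:
  assumes inv: "Inv (St G D Ha Hs f)" and nax: "\<not> axs G D" and ex: "\<exists>A B. Imp A B \<in># G"
  shows "good (St G D Ha Hs f)"
proof -
  obtain A B where q: "iG G = (A, B)" by fastforce
  have mem: "Imp A B \<in># G" using iG[OF ex] q by simp
  define G0 where "G0 = G - {#Imp A B#}"
  have GG: "G = add_mset (Imp A B) G0" using mem unfolding G0_def by simp
  have K: "kids (St G D Ha Hs f) = [St (add_mset B G0) D (insert B Ha) Hs False, St G0 (add_mset A D) Ha (insert A Hs) False]"
    using nax ex q unfolding G0_def by simp
  have v: "valid (G, D)" "set_mset G \<subseteq> Ha" "set_mset D \<subseteq> Hs" using inv unfolding Inv_def by auto
  have sub: "set_mset G0 \<subseteq> set_mset G" unfolding G0_def by (meson in_diffD subsetI)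
  have rule: "grz_rule False (G, D) [((add_mset B G0, D), False), ((G0, add_mset A D), False)]"
    using grz_rule.impL[of False A B G0 D] GG by simp
  have i1: "Inv (St (add_mset B G0) D (insert B Ha) Hs False)"
  proof (rule Inv_step[OF inv])
    show "valid (add_mset B G0, D)"
      by (rule valid_back[OF v(1)]) (auto simp: refutes_def GG)
    show "\<forall>F. F \<in># G \<longrightarrow> F \<in># add_mset B G0 \<or> clos_a (insert B Ha) Hs F"
      using GG by auto
  qed (use v sub in auto)
  have i2: "Inv (St G0 (add_mset A D) Ha (insert A Hs) False)"
  proof (rule Inv_step[OF inv])
    show "valid (G0, add_mset A D)"
      by (rule valid_back[OF v(1)]) (auto simp: refutes_def GG)
    show "\<forall>F. F \<in># G \<longrightarrow> F \<in># G0 \<or> clos_a Ha (insert A Hs) F"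
      using GG by auto
  qed (use v sub in auto)
  have m1: "mu (St (add_mset B G0) D (insert B Ha) Hs False) < mu (St G D Ha Hs f)"
  proof -
    have "sum_mset (image_mset (h (insert B Ha)) G0) \<le> sum_mset (image_mset (h Ha) G0)" by (rule sum_anti) auto
    moreover have "h (insert B Ha) B \<le> h Ha B" by (rule h_anti) auto
    ultimately show ?thesis unfolding mu_def by (simp add: GG)
  qed
  have m2: "mu (St G0 (add_mset A D) Ha (insert A Hs) False) < mu (St G D Ha Hs f)"
    unfolding mu_def by (simp add: GG)
  show ?thesis unfolding good_def using K rule i1 i2 m1 m2 by simp
qed

lemma good_impR:
  assumes inv: "Inv (St G D Ha Hs f)" and nax: "\<not> axs G D" and nG: "\<not> (\<exists>A B. Imp A B \<in># G)"
    and ex: "\<exists>A B. Imp A B \<in># D"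
  shows "good (St G D Ha Hs f)"
proof -
  obtain A B where q: "iG D = (A, B)" by fastforce
  have mem: "Imp A B \<in># D" using iG[OF ex] q by simp
  define D0 where "D0 = D - {#Imp A B#}"
  have DD: "D = add_mset (Imp A B) D0" using mem unfolding D0_def by simp
  have K: "kids (St G D Ha Hs f) = [St (add_mset A G) (add_mset B D0) (insert A Ha) (insert B Hs) False]"
    using nax ex nG q unfolding D0_def by simp
  have v: "valid (G, D)" "set_mset G \<subseteq> Ha" "set_mset D \<subseteq> Hs" using inv unfolding Inv_def by auto
  have sub: "set_mset D0 \<subseteq> set_mset D" unfolding D0_def by (meson in_diffD subsetI)
  have rule: "grz_rule False (G, D) [((add_mset A G, add_mset B D0), False)]"
    using grz_rule.impR[of False G A B D0] DD by simp
  have i1: "Inv (St (add_mset A G) (add_mset B D0) (insert A Ha) (insert B Hs) False)"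
  proof (rule Inv_step[OF inv])
    show "valid (add_mset A G, add_mset B D0)"
      by (rule valid_back[OF v(1)]) (auto simp: refutes_def DD)
    show "\<forall>F. F \<in># D \<longrightarrow> F \<in># add_mset B D0 \<or> clos_s (insert A Ha) (insert B Hs) F"
      using DD by auto
  qed (use v sub in auto)
  have m1: "mu (St (add_mset A G) (add_mset B D0) (insert A Ha) (insert B Hs) False) < mu (St G D Ha Hs f)"
  proof -
    have "sum_mset (image_mset (h (insert A Ha)) G) \<le> sum_mset (image_mset (h Ha) G)" by (rule sum_anti) auto
    moreover have "h (insert A Ha) A \<le> h {} A" by (rule h_anti) auto
    ultimately show ?thesis unfolding mu_def by (simp add: DD)
  qed
  show ?thesis unfolding good_def using K rule i1 m1 by simp
qed

lemma good_refl:
  assumes inv: "Inv (St G D Ha Hs f)" and nax: "\<not> axs G D" and nG: "\<not> (\<exists>A B. Imp A B \<in># G)"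
    and nD: "\<not> (\<exists>A B. Imp A B \<in># D)" and ex: "\<exists>B. Box B \<in># G \<and> B \<notin> Ha"
  shows "good (St G D Ha Hs f)"
proof -
  define B where "B = rG Ha G"
  have mem: "Box B \<in># G" "B \<notin> Ha" using rG[OF ex] unfolding B_def by auto
  define G0 where "G0 = G - {#Box B#}"
  have GG: "G = add_mset (Box B) G0" using mem unfolding G0_def by simp
  have K: "kids (St G D Ha Hs f) = [St (add_mset B G) D (insert B Ha) Hs False]"
    using nax ex nG nD unfolding B_def by simp
  have v: "valid (G, D)" "set_mset G \<subseteq> Ha" "set_mset D \<subseteq> Hs" using inv unfolding Inv_def by auto
  have rule: "grz_rule False (G, D) [((add_mset B G, D), False)]"
    using grz_rule.refl[of False B G0 D] GG by simp
  have i1: "Inv (St (add_mset B G) D (insert B Ha) Hs False)"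
  proof (rule Inv_step[OF inv])
    show "valid (add_mset B G, D)"
      by (rule valid_back[OF v(1)]) (auto simp: refutes_def)
  qed (use v in auto)
  have m1: "mu (St (add_mset B G) D (insert B Ha) Hs False) < mu (St G D Ha Hs f)"
  proof -
    have "sum_mset (image_mset (h (insert B Ha)) G0) \<le> sum_mset (image_mset (h Ha) G0)" by (rule sum_anti) auto
    moreover have "h (insert B Ha) B \<le> h Ha B" by (rule h_anti) auto
    ultimately show ?thesis unfolding mu_def using mem(2) by (simp add: GG)
  qed
  show ?thesis unfolding good_def using K rule i1 m1 by simp
qed

lemma good_box:
  assumes inv: "Inv (St G D Ha Hs f)" and nax: "\<not> axs G D" and nG: "\<not> (\<exists>A B. Imp A B \<in># G)"
    and nD: "\<not> (\<exists>A B. Imp A B \<in># D)" and nr: "\<not> (\<exists>B. Box B \<in># G \<and> B \<notin> Ha)"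
  shows "good (St G D Ha Hs f)"
proof -
  have ex: "\<exists>A. Box A \<in># D \<and> valid (image_mset Box (unbx G), {#A#})"
    using saturated_box[OF inv] nax nG nD nr unfolding axs_def by blast
  define A where "A = bA G D"
  have mem: "Box A \<in># D" "valid (image_mset Box (unbx G), {#A#})" using bA[OF ex] unfolding A_def by auto
  define D0 where "D0 = D - {#Box A#}"
  have DD: "D = add_mset (Box A) D0" using mem unfolding D0_def by simp
  define G1 where "G1 = filter_mset (\<lambda>x. \<not> is_box x) G"
  have GG: "G = G1 + image_mset Box (unbx G)" unfolding G1_def by (rule box_unbx_split)
  have K: "kids (St G D Ha Hs f) = [St G (add_mset A D0) Ha (insert A Hs) False,
     St (image_mset Box (unbx G)) {#A#} (set_mset (image_mset Box (unbx G))) {A} True]"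
    using nax ex nG nD nr unfolding A_def D0_def by simp
  have v: "valid (G, D)" "set_mset G \<subseteq> Ha" "set_mset D \<subseteq> Hs" using inv unfolding Inv_def by auto
  have sub: "set_mset D0 \<subseteq> set_mset D" unfolding D0_def by (meson in_diffD subsetI)
  have rule: "grz_rule False (G, D) [((G, add_mset A D0), False), ((image_mset Box (unbx G), {#A#}), True)]"
    using grz_rule.box[of False G1 "unbx G" A D0] GG DD by metis
  have i1: "Inv (St G (add_mset A D0) Ha (insert A Hs) False)"
  proof (rule Inv_step[OF inv])
    show "valid (G, add_mset A D0)"
    proof (rule valid_back[OF v(1)])
      fix W R V w assume md: "model W R" and r: "refutes W R V w (G, add_mset A D0)"
      show "refutes W R V w (G, D)"
      proof -
        have "w \<in> W" using r unfolding refutes_def by simp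
        then have "R w w" using md unfolding model_def by blast
        then show ?thesis using r \<open>w \<in> W\<close> unfolding refutes_def DD by auto
      qed
    qed
    show "\<forall>F. F \<in># D \<longrightarrow> F \<in># add_mset A D0 \<or> clos_s Ha (insert A Hs) F"
      using DD by auto
  qed (use v sub in auto)
  have i2: "Inv (St (image_mset Box (unbx G)) {#A#} (set_mset (image_mset Box (unbx G))) {A} True)"
    unfolding Inv_def using mem(2) by auto
  have m1: "mu (St G (add_mset A D0) Ha (insert A Hs) False) < mu (St G D Ha Hs f)"
    unfolding mu_def by (simp add: DD)
  show ?thesis unfolding good_def using K rule i1 i2 m1 by simp
qed

lemma good_all: "Inv s \<Longrightarrow> good s"
proof (cases s)
  case (St G D Ha Hs f)
  assume inv: "Inv s"
  show ?thesis
    using good_ax good_impL good_impR good_refl good_box inv unfolding St by metis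
qed


lemma valid_pos_snoc: "valid_pos nch (p @ [i]) \<longleftrightarrow> valid_pos nch p \<and> i < nch p"
  unfolding valid_pos_def
proof safe
  fix k assume a: "\<forall>k<length (p @ [i]). (p @ [i]) ! k < nch (take k (p @ [i]))" "k < length p"
  then show "p ! k < nch (take k p)" using a(1)[rule_format, of k] by (simp add: nth_append)
next
  assume a: "\<forall>k<length (p @ [i]). (p @ [i]) ! k < nch (take k (p @ [i]))"
  then show "i < nch p" using a[rule_format, of "length p"] by simp
next
  fix k assume a: "\<forall>k<length p. p ! k < nch (take k p)" "i < nch p" "k < length (p @ [i])"
  then show "(p @ [i]) ! k < nch (take k (p @ [i]))"
    by (cases "k < length p") (auto simp: nth_append)
qed

lemma valid_pos_nil: "valid_pos nch []" unfolding valid_pos_def by simp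

lemma tree_sound:
  assumes ip: "inf_proof c lab nch rb" and m: "model W R" and r0: "refutes W R V w0 (lab [])"
  shows False
proof -
  have rl: "\<And>p. valid_pos nch p \<Longrightarrow> grz_rule c (lab p) (map (\<lambda>i. (lab (p @ [i]), rb (p @ [i]))) [0..<nch p])"
    and br: "\<And>b. (\<forall>n. b n < nch (map b [0..<n])) \<Longrightarrow> infinite {n. rb (map b [0..<Suc n])}"
    using ip unfolding inf_proof_def by auto
  define Q where "Q p w \<longleftrightarrow> valid_pos nch p \<and> refutes W R V w (lab p)" for p w
  define N where "N p w iw \<longleftrightarrow> fst iw < nch p \<and> snd iw \<in> W \<and> R w (snd iw) \<and> refutes W R V (snd iw) (lab (p @ [fst iw]))
     \<and> (if rb (p @ [fst iw]) then snd iw \<noteq> w else snd iw = w)" for p w iw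
  have step: "\<exists>iw. N p w iw" if "Q p w" for p w
  proof -
    from that have vp: "valid_pos nch p" and rf: "refutes W R V w (lab p)" unfolding Q_def by auto
    from rule_sound[OF rl[OF vp] m rf] obtain j w' where
      "j < nch p" "w' \<in> W" "R w w'" "refutes W R V w' (lab (p @ [j]))"
      "if rb (p @ [j]) then w' \<noteq> w else w' = w" by auto
    then show ?thesis unfolding N_def by (intro exI[of _ "(j, w')"]) simp
  qed
  define nx where "nx p w = (SOME iw. N p w iw)" for p w
  have nxN: "N p w (nx p w)" if "Q p w" for p w
    unfolding nx_def using step[OF that] by (rule someI_ex)
  define S where "S = rec_nat ([], w0) (\<lambda>n q. (fst q @ [fst (nx (fst q) (snd q))], snd (nx (fst q) (snd q))))"
  have S0: "S 0 = ([], w0)" and SS: "S (Suc n) = (fst (S n) @ [fst (nx (fst (S n)) (snd (S n)))], snd (nx (fst (S n)) (snd (S n))))" for n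
    unfolding S_def by simp_all
  define b where "b n = fst (nx (fst (S n)) (snd (S n)))" for n
  have SQ: "fst (S n) = map b [0..<n] \<and> Q (fst (S n)) (snd (S n))" for n
  proof (induction n)
    case 0 then show ?case using S0 r0 valid_pos_nil unfolding Q_def by simp
  next
    case (Suc n)
    then have N: "N (fst (S n)) (snd (S n)) (nx (fst (S n)) (snd (S n)))" using nxN by blast
    have e: "fst (S (Suc n)) = fst (S n) @ [b n]" "snd (S (Suc n)) = snd (nx (fst (S n)) (snd (S n)))"
      using SS[of n] b_def by simp_all
    have bl: "b n < nch (fst (S n))" "refutes W R V (snd (S (Suc n))) (lab (fst (S n) @ [b n]))"
      using N unfolding N_def e by (simp_all add: b_def[symmetric])
    have ih: "fst (S n) = map b [0..<n]" "valid_pos nch (fst (S n))" using Suc.IH unfolding Q_def by auto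
    have "valid_pos nch (fst (S n) @ [b n])" using ih(2) bl(1) valid_pos_snoc by blast
    then show ?case unfolding Q_def e(1) using bl(2) ih(1) by simp
  qed
  have Nn: "N (map b [0..<n]) (snd (S n)) (nx (fst (S n)) (snd (S n)))" for n
    using nxN SQ[of n] by metis
  have bn: "\<forall>n. b n < nch (map b [0..<n])" using Nn unfolding N_def b_def by (metis SQ)
  have inf: "infinite {n. rb (map b [0..<Suc n])}" using br[OF bn] .
  define f where "f n = ht W R (snd (S n))" for n
  have inW: "snd (S n) \<in> W" for n using SQ[of n] unfolding Q_def refutes_def by auto
  have sw: "snd (S (Suc n)) = snd (nx (fst (S n)) (snd (S n)))" for n using SS[of n] by simp
  have key: "snd (S (Suc n)) \<in> W \<and> R (snd (S n)) (snd (S (Suc n))) \<and>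
     (rb (map b [0..<Suc n]) \<longrightarrow> snd (S (Suc n)) \<noteq> snd (S n))" for n
    using Nn[of n] unfolding N_def b_def[symmetric] sw[symmetric] by (auto split: if_splits)
  have fdec: "f (Suc n) \<le> f n" for n
    using key[of n] inW[of n] ht_mono(1)[OF m] unfolding f_def by blast
  have "{n. rb (map b [0..<Suc n])} \<subseteq> {n. f (Suc n) < f n}"
    using key inW ht_mono(2)[OF m] unfolding f_def by blast
  then have "infinite {n. f (Suc n) < f n}" using inf infinite_super by blast
  then show False using no_inf_descent fdec by blast
qed

lemma provable_valid: "provable c S \<Longrightarrow> valid S"
  unfolding provable_def valid_def using tree_sound by blast

theorem theorem6p6:
  fixes \<Gamma> \<Delta> :: "fm multiset"
  assumes "Grz_inf_cut_provable (\<Gamma>, \<Delta>)"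
  shows "Grz_inf_provable (\<Gamma>, \<Delta>)"
proof -
  have v: "valid (\<Gamma>, \<Delta>)" using provable_valid[OF assms] .
  define s0 where "s0 = St \<Gamma> \<Delta> (set_mset \<Gamma>) (set_mset \<Delta>) False"
  have inv0: "Inv s0" unfolding s0_def Inv_def using v by auto
  define stp where "stp p = foldl (\<lambda>s i. kids s ! i) s0 p" for p
  define lab where "lab p = (sG (stp p), sD (stp p))" for p
  define nch where "nch p = length (kids (stp p))" for p
  define rb where "rb p = sF (stp p)" for p
  have stp_snoc: "stp (p @ [i]) = kids (stp p) ! i" for p i unfolding stp_def by simp
  have invp: "valid_pos nch p \<Longrightarrow> Inv (stp p)" for p
  proof (induction p rule: rev_induct)
    case Nil then show ?case using inv0 unfolding stp_def by simp
  next
    case (snoc i p)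
    then have vp: "valid_pos nch p" "i < nch p" using valid_pos_snoc by auto
    then have "Inv (stp p)" using snoc.IH by blast
    then have "good (stp p)" by (rule good_all)
    then show ?case unfolding good_def stp_snoc using vp(2) nch_def by auto
  qed
  have mapeq: "map (\<lambda>i. (lab (p @ [i]), rb (p @ [i]))) [0..<nch p] = map out (kids (stp p))" for p
    unfolding lab_def rb_def nch_def stp_snoc by (rule nth_equalityI) auto
  have rules: "\<forall>p. valid_pos nch p \<longrightarrow> grz_rule False (lab p) (map (\<lambda>i. (lab (p @ [i]), rb (p @ [i]))) [0..<nch p])"
  proof (intro allI impI)
    fix p assume "valid_pos nch p"
    then have "good (stp p)" using invp good_all by blast
    then have "grz_rule False (lab p) (map out (kids (stp p)))"
      unfolding good_def lab_def by simp
    then show "grz_rule False (lab p) (map (\<lambda>i. (lab (p @ [i]), rb (p @ [i]))) [0..<nch p])"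
      unfolding mapeq .
  qed
  have branches: "infinite {n. rb (map b [0..<Suc n])}" if bn: "\<forall>n. b n < nch (map b [0..<n])" for b
  proof
    assume fin: "finite {n. rb (map b [0..<Suc n])}"
    define q where "q n = map b [0..<n]" for n
    have qS: "q (Suc n) = q n @ [b n]" for n unfolding q_def by simp
    have vq: "valid_pos nch (q n)" for n
    proof (induction n)
      case 0 then show ?case unfolding q_def using valid_pos_nil by simp
    next
      case (Suc n) then show ?case using bn qS valid_pos_snoc unfolding q_def by metis
    qed
    obtain N where N: "\<forall>n\<ge>N. \<not> rb (q (Suc n))"
      using fin unfolding q_def by (metis (mono_tags, lifting) finite_nat_set_iff_bounded_le mem_Collect_eq not_less_eq_eq)
    have dec: "mu (stp (q (Suc n))) < mu (stp (q n))" if "n \<ge> N" for n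
    proof -
      have "good (stp (q n))" using invp[OF vq] good_all by blast
      moreover have "b n < length (kids (stp (q n)))" using bn unfolding nch_def q_def by simp
      ultimately show ?thesis using N that unfolding good_def qS stp_snoc rb_def by (auto simp: qS stp_snoc)
    qed
    have "mu (stp (q (N + k))) + k \<le> mu (stp (q N))" for k
    proof (induction k)
      case (Suc k) then show ?case using dec[of "N + k"] by simp
    qed simp
    from this[of "Suc (mu (stp (q N)))"] show False by simp
  qed
  have "inf_proof False lab nch rb" unfolding inf_proof_def using rules branches by blast
  moreover have "lab [] = (\<Gamma>, \<Delta>)" unfolding lab_def stp_def s0_def by simp
  ultimately show ?thesis unfolding provable_def by blast
qed

end
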